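(* Let $u=\sum_{j=1}^nF_j\otimes h^{(j)}\in\mathcal{S}_{\mathfrak{h},\delta}$. Then for all $f,g\in\mathfrak{h}_\mathbb{C}$, \[\langle\mathcal{E}(f),\delta(u)\mathcal{E}(g)\rangle=\Big\langle\mathcal{E}(f)\otimes\begin{pmatrix}if-i\overline g\\ f+\overline g\end{pmatrix},\,u\,\mathcal{E}(g)\Big\rangle,\] where $u\mathcal{E}(g)=\sum_jF_j\mathcal{E}(g)\otimes h^{(j)}\in\mathfrak{H}\otimes\mathfrak{h}_\mathbb{C}\otimes\mathbb{C}^2$; explicitly the right-hand side equals $\sum_j\big(\langle if-i\overline g,h^{(j)}_1\rangle+\langle f+\overline g,h^{(j)}_2\rangle\big)\langle\mathcal{E}(f),F_j\mathcal{E}(g)\rangle$.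
   Context: $\mathfrak{h}$ is a real separable Hilbert space, $\mathfrak{h}_\mathbb{C}$ its complexification (inner products antilinear in the first argument), with conjugation $\overline{h_1+ih_2}=h_1-ih_2$; elements of $\mathfrak{h}\otimes\mathbb{R}^2$ (resp. $\mathfrak{h}_\mathbb{C}\otimes\mathbb{C}^2$) are pairs of elements of $\mathfrak{h}$ (resp. $\mathfrak{h}_\mathbb{C}$). $\mathfrak{H}=\Gamma_s(\mathfrak{h}_\mathbb{C})$ is the symmetric Fock space with exponential vectors $\mathcal{E}(k)=\sum_nk^{\otimes n}/\sqrt{n!}$. $a(h),a^+(h)$ are annihilation/creation operators ($a(h)\mathcal{E}(g)=\langle h,g\rangle\mathcal{E}(g)$, $a^+(h)=a(h)^*$), $Q(h)=a(\overline h)+a^+(h)$, $P(h)=i(a(\overline h)-a^+(h))$, $U(h_1,h_2)=\exp(iP(h_1)+iQ(h_2))$. Expressions involving these unbounded operators and bounded operators "define a bounded operator $M$" if their matrix elements between exponential vectors (moving unbounded factors onto the vectors via adjoints) coincide with those of $M$. For $h=(h_1,h_2)\in\mathfrak{h}\otimes\mathbb{R}^2$, $O_h(\varphi)$ is the bounded operator $M$ (when it exists; $\varphi\in\mathrm{Dom}\,O_h$) with $\langle\mathcal{E}(k_1),M\mathcal{E}(k_2)\rangle=\frac1{2\pi}\int_{\mathbb{R}^2}\langle\mathcal{E}(k_1),U(uh_1,vh_2)\mathcal{E}(k_2)\rangle\mathcal{F}^{-1}\varphi(u,v)\mathrm{d}u\mathrm{d}v$, where $\mathcal{F}^{-1}\varphi(x,y)=\frac1{2\pi}\int\varphi(u,v)e^{-i(ux+vy)}\mathrm{d}u\mathrm{d}v$.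 $\mathcal{S}$ is the algebra generated by all $O_h(\varphi)$ with $h\in\mathfrak{h}\otimes\mathbb{R}^2$, $\varphi\in C^\infty(\mathbb{R}^2)$ all of whose partial derivatives lie in $\mathrm{Dom}\,O_h$. For $h\in\mathfrak{h}_\mathbb{C}\otimes\mathbb{C}^2$ and $F\in\mathcal{S}$, $D_hF$ is the bounded operator defined by $\frac i2[Q(h_1)-P(h_2),F]$. $\mathcal{S}_{\mathfrak{h},\delta}$ is the set of finite sums $u=\sum_jF_j\otimes h^{(j)}$ with $F_j\in\mathcal{S}$, $h^{(j)}\in\mathfrak{h}_\mathbb{C}\otimes\mathbb{C}^2$, such that $\delta(u):=\frac12\sum_j\{P(h^{(j)}_1)+Q(h^{(j)}_2),F_j\}-\sum_jD_{h^{(j)}}F_j$ defines a bounded operator on $\mathfrak{H}$ ($\{X,Y\}=XY+YX$); $\delta(u)$ is the divergence of $u$. *)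

theory Defs
  imports "HOL-Analysis.Analysis"
begin

text \<open>The real separable Hilbert space h is realised as l2 over a countable index
type 'i (a fixed orthonormal basis); its complexification h_C is l2('i; complex).
The symmetric Fock space over h_C is realised in the occupation-number basis:
vectors are square-summable complex functions on the finitely supported
occupation functions 'i => nat.\<close>

definition l2 :: "('i \<Rightarrow> complex) \<Rightarrow> bool" where
  "l2 k \<longleftrightarrow> (\<lambda>i. (cmod (k i))\<^sup>2) summable_on UNIV"

definition rl2 :: "('i \<Rightarrow> real) \<Rightarrow> bool" where
  "rl2 x \<longleftrightarrow> (\<lambda>i. (x i)\<^sup>2) summable_on UNIV"

definition hinner :: "('i \<Rightarrow> complex) \<Rightarrow> ('i \<Rightarrow> complex) \<Rightarrow> complex" where
  "hinner k l = (\<Sum>\<^sub>\<infinity>i. cnj (k i) * l i)"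

definition hconj :: "('i \<Rightarrow> complex) \<Rightarrow> ('i \<Rightarrow> complex)" where
  "hconj k = (\<lambda>i. cnj (k i))"

definition occ :: "('i \<Rightarrow> nat) set" where
  "occ = {n. finite {i. n i \<noteq> 0}}"

definition fock :: "(('i \<Rightarrow> nat) \<Rightarrow> complex) \<Rightarrow> bool" where
  "fock \<psi> \<longleftrightarrow> (\<forall>n. n \<notin> occ \<longrightarrow> \<psi> n = 0) \<and> (\<lambda>n. (cmod (\<psi> n))\<^sup>2) summable_on UNIV"

definition finner :: "(('i \<Rightarrow> nat) \<Rightarrow> complex) \<Rightarrow> (('i \<Rightarrow> nat) \<Rightarrow> complex) \<Rightarrow> complex" where
  "finner \<phi> \<psi> = (\<Sum>\<^sub>\<infinity>n. cnj (\<phi> n) * \<psi> n)"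

definition fnorm :: "(('i \<Rightarrow> nat) \<Rightarrow> complex) \<Rightarrow> real" where
  "fnorm \<psi> = sqrt (\<Sum>\<^sub>\<infinity>n. (cmod (\<psi> n))\<^sup>2)"

text \<open>exponential vector E(k) = sum_n k^(tensor n)/sqrt(n!) in the occupation basis\<close>
definition expv :: "('i \<Rightarrow> complex) \<Rightarrow> ('i \<Rightarrow> nat) \<Rightarrow> complex" where
  "expv k n = (if n \<in> occ then
      (\<Prod>i\<in>{i. n i \<noteq> 0}. k i ^ n i / complex_of_real (sqrt (fact (n i)))) else 0)"

definition incr :: "('i \<Rightarrow> nat) \<Rightarrow> 'i \<Rightarrow> ('i \<Rightarrow> nat)" where
  "incr n i = n(i := Suc (n i))"

definition decr :: "('i \<Rightarrow> nat) \<Rightarrow> 'i \<Rightarrow> ('i \<Rightarrow> nat)" where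
  "decr n i = n(i := n i - 1)"

definition ann :: "('i \<Rightarrow> complex) \<Rightarrow> (('i \<Rightarrow> nat) \<Rightarrow> complex) \<Rightarrow> (('i \<Rightarrow> nat) \<Rightarrow> complex)" where
  "ann h \<psi> = (\<lambda>n. if n \<in> occ then
      (\<Sum>\<^sub>\<infinity>i. cnj (h i) * complex_of_real (sqrt (real (Suc (n i)))) * \<psi> (incr n i)) else 0)"

definition cre :: "('i \<Rightarrow> complex) \<Rightarrow> (('i \<Rightarrow> nat) \<Rightarrow> complex) \<Rightarrow> (('i \<Rightarrow> nat) \<Rightarrow> complex)" where
  "cre h \<psi> = (\<lambda>n. if n \<in> occ then
      (\<Sum>i\<in>{i. n i \<noteq> 0}. h i * complex_of_real (sqrt (real (n i))) * \<psi> (decr n i)) else 0)"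

definition Qop :: "('i \<Rightarrow> complex) \<Rightarrow> (('i \<Rightarrow> nat) \<Rightarrow> complex) \<Rightarrow> (('i \<Rightarrow> nat) \<Rightarrow> complex)" where
  "Qop h \<psi> = (\<lambda>n. ann (hconj h) \<psi> n + cre h \<psi> n)"

definition Pop :: "('i \<Rightarrow> complex) \<Rightarrow> (('i \<Rightarrow> nat) \<Rightarrow> complex) \<Rightarrow> (('i \<Rightarrow> nat) \<Rightarrow> complex)" where
  "Pop h \<psi> = (\<lambda>n. \<i> * (ann (hconj h) \<psi> n - cre h \<psi> n))"

definition bounded_op :: "((('i \<Rightarrow> nat) \<Rightarrow> complex) \<Rightarrow> (('i \<Rightarrow> nat) \<Rightarrow> complex)) \<Rightarrow> bool" where
  "bounded_op T \<longleftrightarrow> (\<forall>\<psi>. fock \<psi> \<longrightarrow> fock (T \<psi>)) \<and>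
     (\<forall>\<psi> \<phi> c. fock \<psi> \<longrightarrow> fock \<phi> \<longrightarrow> T (\<lambda>n. c * \<psi> n + \<phi> n) = (\<lambda>n. c * T \<psi> n + T \<phi> n)) \<and>
     (\<exists>C. \<forall>\<psi>. fock \<psi> \<longrightarrow> fnorm (T \<psi>) \<le> C * fnorm \<psi>)"

text \<open>U(h1,h2) = exp(iP(h1)+iQ(h2)) = exp(a^+(z) - a(z)), z = h1 + i h2, acts on
exponential vectors by U(h1,h2) E(k) = exp(-|z|^2/2 - <z,k>) E(k+z).\<close>
definition weyl_expv :: "('i \<Rightarrow> real) \<Rightarrow> ('i \<Rightarrow> real) \<Rightarrow> ('i \<Rightarrow> complex) \<Rightarrow> (('i \<Rightarrow> nat) \<Rightarrow> complex)" where
  "weyl_expv h1 h2 k = (let z = (\<lambda>i. complex_of_real (h1 i) + \<i> * complex_of_real (h2 i)) in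
     (\<lambda>n. exp (- complex_of_real ((\<Sum>\<^sub>\<infinity>i. (cmod (z i))\<^sup>2) / 2) - hinner z k) * expv (\<lambda>i. k i + z i) n))"

definition finv :: "(real \<times> real \<Rightarrow> complex) \<Rightarrow> real \<times> real \<Rightarrow> complex" where
  "finv \<phi> p = complex_of_real (1 / (2 * pi)) *
     (\<integral>q. \<phi> q * exp (- \<i> * complex_of_real (fst q * fst p + snd q * snd p)) \<partial>lborel)"

definition O_integrand :: "('i \<Rightarrow> real) \<Rightarrow> ('i \<Rightarrow> real) \<Rightarrow> (real \<times> real \<Rightarrow> complex)
    \<Rightarrow> ('i \<Rightarrow> complex) \<Rightarrow> ('i \<Rightarrow> complex) \<Rightarrow> real \<times> real \<Rightarrow> complex" where
  "O_integrand h1 h2 \<phi> k1 k2 q =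
     finner (expv k1) (weyl_expv (\<lambda>i. fst q * h1 i) (\<lambda>i. snd q * h2 i) k2) * finv \<phi> q"

definition O_me :: "('i \<Rightarrow> real) \<Rightarrow> ('i \<Rightarrow> real) \<Rightarrow> (real \<times> real \<Rightarrow> complex)
    \<Rightarrow> ('i \<Rightarrow> complex) \<Rightarrow> ('i \<Rightarrow> complex) \<Rightarrow> complex" where
  "O_me h1 h2 \<phi> k1 k2 = complex_of_real (1 / (2 * pi)) * (\<integral>q. O_integrand h1 h2 \<phi> k1 k2 q \<partial>lborel)"

definition domO :: "('i \<Rightarrow> real) \<Rightarrow> ('i \<Rightarrow> real) \<Rightarrow> (real \<times> real \<Rightarrow> complex) set" where
  "domO h1 h2 = {\<phi>. integrable lborel \<phi> \<and>
     (\<forall>k1 k2. l2 k1 \<longrightarrow> l2 k2 \<longrightarrow> integrable lborel (O_integrand h1 h2 \<phi> k1 k2)) \<and>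
     (\<exists>M. bounded_op M \<and> (\<forall>k1 k2. l2 k1 \<longrightarrow> l2 k2 \<longrightarrow> finner (expv k1) (M (expv k2)) = O_me h1 h2 \<phi> k1 k2))}"

definition Oop :: "('i \<Rightarrow> real) \<Rightarrow> ('i \<Rightarrow> real) \<Rightarrow> (real \<times> real \<Rightarrow> complex)
    \<Rightarrow> (('i \<Rightarrow> nat) \<Rightarrow> complex) \<Rightarrow> (('i \<Rightarrow> nat) \<Rightarrow> complex)" where
  "Oop h1 h2 \<phi> = (SOME M. bounded_op M \<and>
     (\<forall>k1 k2. l2 k1 \<longrightarrow> l2 k2 \<longrightarrow> finner (expv k1) (M (expv k2)) = O_me h1 h2 \<phi> k1 k2))"

definition pd1 :: "(real \<times> real \<Rightarrow> complex) \<Rightarrow> real \<times> real \<Rightarrow> complex" where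
  "pd1 \<psi> = (\<lambda>p. vector_derivative (\<lambda>t. \<psi> (t, snd p)) (at (fst p)))"

definition pd2 :: "(real \<times> real \<Rightarrow> complex) \<Rightarrow> real \<times> real \<Rightarrow> complex" where
  "pd2 \<psi> = (\<lambda>p. vector_derivative (\<lambda>t. \<psi> (fst p, t)) (at (snd p)))"

inductive_set pds :: "(real \<times> real \<Rightarrow> complex) \<Rightarrow> (real \<times> real \<Rightarrow> complex) set"
  for \<phi> :: "real \<times> real \<Rightarrow> complex" where
  base: "\<phi> \<in> pds \<phi>"
| d1: "\<psi> \<in> pds \<phi> \<Longrightarrow> pd1 \<psi> \<in> pds \<phi>"
| d2: "\<psi> \<in> pds \<phi> \<Longrightarrow> pd2 \<psi> \<in> pds \<phi>"

definition smooth2 :: "(real \<times> real \<Rightarrow> complex) \<Rightarrow> bool" where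
  "smooth2 \<phi> \<longleftrightarrow> (\<forall>\<psi>\<in>pds \<phi>. continuous_on UNIV \<psi> \<and>
     (\<forall>x y. (\<lambda>t. \<psi> (t, y)) differentiable (at x) \<and> (\<lambda>t. \<psi> (x, t)) differentiable (at y)))"

inductive_set Salg :: "((('i \<Rightarrow> nat) \<Rightarrow> complex) \<Rightarrow> (('i \<Rightarrow> nat) \<Rightarrow> complex)) set" where
  gen: "rl2 h1 \<Longrightarrow> rl2 h2 \<Longrightarrow> smooth2 \<phi> \<Longrightarrow> pds \<phi> \<subseteq> domO h1 h2 \<Longrightarrow> Oop h1 h2 \<phi> \<in> Salg"
| add: "A \<in> Salg \<Longrightarrow> B \<in> Salg \<Longrightarrow> (\<lambda>\<psi> n. A \<psi> n + B \<psi> n) \<in> Salg"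
| mult: "A \<in> Salg \<Longrightarrow> B \<in> Salg \<Longrightarrow> (\<lambda>\<psi>. A (B \<psi>)) \<in> Salg"
| scal: "A \<in> Salg \<Longrightarrow> (\<lambda>\<psi> n. c * A \<psi> n) \<in> Salg"

text \<open>X = P(h1)+Q(h2) with adjoint P(conj h1)+Q(conj h2);
      Y = Q(h1)-P(h2) with adjoint Q(conj h1)-P(conj h2)\<close>
definition Xop :: "('i \<Rightarrow> complex) \<Rightarrow> ('i \<Rightarrow> complex) \<Rightarrow> (('i \<Rightarrow> nat) \<Rightarrow> complex) \<Rightarrow> (('i \<Rightarrow> nat) \<Rightarrow> complex)" where
  "Xop h1 h2 \<psi> = (\<lambda>n. Pop h1 \<psi> n + Qop h2 \<psi> n)"

definition Yop :: "('i \<Rightarrow> complex) \<Rightarrow> ('i \<Rightarrow> complex) \<Rightarrow> (('i \<Rightarrow> nat) \<Rightarrow> complex) \<Rightarrow> (('i \<Rightarrow> nat) \<Rightarrow> complex)" where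
  "Yop h1 h2 \<psi> = (\<lambda>n. Qop h1 \<psi> n - Pop h2 \<psi> n)"

text \<open>matrix element <E(f), D_h F E(g)> of (i/2)[Q(h1)-P(h2), F]\<close>
definition D_me :: "('i \<Rightarrow> complex) \<Rightarrow> ('i \<Rightarrow> complex) \<Rightarrow> ((('i \<Rightarrow> nat) \<Rightarrow> complex) \<Rightarrow> (('i \<Rightarrow> nat) \<Rightarrow> complex))
    \<Rightarrow> ('i \<Rightarrow> complex) \<Rightarrow> ('i \<Rightarrow> complex) \<Rightarrow> complex" where
  "D_me h1 h2 F f g = \<i> / 2 *
     (finner (Yop (hconj h1) (hconj h2) (expv f)) (F (expv g)) - finner (expv f) (F (Yop h1 h2 (expv g))))"

text \<open>matrix element <E(f), (1/2){P(h1)+Q(h2), F} E(g)>\<close>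
definition A_me :: "('i \<Rightarrow> complex) \<Rightarrow> ('i \<Rightarrow> complex) \<Rightarrow> ((('i \<Rightarrow> nat) \<Rightarrow> complex) \<Rightarrow> (('i \<Rightarrow> nat) \<Rightarrow> complex))
    \<Rightarrow> ('i \<Rightarrow> complex) \<Rightarrow> ('i \<Rightarrow> complex) \<Rightarrow> complex" where
  "A_me h1 h2 F f g = 1 / 2 *
     (finner (Xop (hconj h1) (hconj h2) (expv f)) (F (expv g)) + finner (expv f) (F (Xop h1 h2 (expv g))))"

text \<open>u = sum_{j<n} F j (tensor) (H1 j, H2 j)\<close>
definition delta_me :: "(nat \<Rightarrow> (('i \<Rightarrow> nat) \<Rightarrow> complex) \<Rightarrow> (('i \<Rightarrow> nat) \<Rightarrow> complex))
    \<Rightarrow> (nat \<Rightarrow> 'i \<Rightarrow> complex) \<Rightarrow> (nat \<Rightarrow> 'i \<Rightarrow> complex) \<Rightarrow> nat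
    \<Rightarrow> ('i \<Rightarrow> complex) \<Rightarrow> ('i \<Rightarrow> complex) \<Rightarrow> complex" where
  "delta_me F H1 H2 n f g = (\<Sum>j<n. A_me (H1 j) (H2 j) (F j) f g - D_me (H1 j) (H2 j) (F j) f g)"

definition in_Shd :: "(nat \<Rightarrow> (('i \<Rightarrow> nat) \<Rightarrow> complex) \<Rightarrow> (('i \<Rightarrow> nat) \<Rightarrow> complex))
    \<Rightarrow> (nat \<Rightarrow> 'i \<Rightarrow> complex) \<Rightarrow> (nat \<Rightarrow> 'i \<Rightarrow> complex) \<Rightarrow> nat \<Rightarrow> bool" where
  "in_Shd F H1 H2 n \<longleftrightarrow> (\<forall>j<n. F j \<in> Salg \<and> l2 (H1 j) \<and> l2 (H2 j)) \<and>
     (\<exists>M. bounded_op M \<and> (\<forall>f g. l2 f \<longrightarrow> l2 g \<longrightarrow> finner (expv f) (M (expv g)) = delta_me F H1 H2 n f g))"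

definition delta :: "(nat \<Rightarrow> (('i \<Rightarrow> nat) \<Rightarrow> complex) \<Rightarrow> (('i \<Rightarrow> nat) \<Rightarrow> complex))
    \<Rightarrow> (nat \<Rightarrow> 'i \<Rightarrow> complex) \<Rightarrow> (nat \<Rightarrow> 'i \<Rightarrow> complex) \<Rightarrow> nat
    \<Rightarrow> (('i \<Rightarrow> nat) \<Rightarrow> complex) \<Rightarrow> (('i \<Rightarrow> nat) \<Rightarrow> complex)" where
  "delta F H1 H2 n = (SOME M. bounded_op M \<and>
     (\<forall>f g. l2 f \<longrightarrow> l2 g \<longrightarrow> finner (expv f) (M (expv g)) = delta_me F H1 H2 n f g))"

end

theory Submission
  imports Defs
begin

lemma occ_finite: "n \<in> occ \<Longrightarrow> finite {i. n i \<noteq> 0}"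
  by (simp add: occ_def)

lemma incr_occ: "n \<in> occ \<Longrightarrow> incr n i \<in> occ"
proof -
  assume "n \<in> occ"
  then have "finite (insert i {i. n i \<noteq> 0})" by (simp add: occ_def)
  moreover have "{j. incr n i j \<noteq> 0} \<subseteq> insert i {i. n i \<noteq> 0}" by (auto simp: incr_def)
  ultimately show ?thesis unfolding occ_def by (auto intro: finite_subset)
qed

lemma decr_occ: "n \<in> occ \<Longrightarrow> decr n i \<in> occ"
proof -
  assume "n \<in> occ"
  then have "finite {i. n i \<noteq> 0}" by (simp add: occ_def)
  moreover have "{j. decr n i j \<noteq> 0} \<subseteq> {i. n i \<noteq> 0}" by (auto simp: decr_def)
  ultimately show ?thesis unfolding occ_def by (auto intro: finite_subset)
qed

lemma expv_T:
  assumes "n \<in> occ" "finite T" "{i. n i \<noteq> 0} \<subseteq> T"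
  shows "expv k n = (\<Prod>i\<in>T. k i ^ n i / complex_of_real (sqrt (fact (n i))))"
proof -
  have "expv k n = (\<Prod>i\<in>{i. n i \<noteq> 0}. k i ^ n i / complex_of_real (sqrt (fact (n i))))"
    using assms by (simp add: expv_def)
  also have "\<dots> = (\<Prod>i\<in>T. k i ^ n i / complex_of_real (sqrt (fact (n i))))"
    by (rule prod.mono_neutral_left) (use assms in auto)
  finally show ?thesis .
qed

lemma norm_expv_sq:
  assumes "n \<in> occ" "finite T" "{i. n i \<noteq> 0} \<subseteq> T"
  shows "(cmod (expv k n))\<^sup>2 = (\<Prod>i\<in>T. ((cmod (k i))\<^sup>2) ^ n i / fact (n i))"
proof -
  have "(cmod (expv k n))\<^sup>2 = (\<Prod>i\<in>T. (cmod (k i ^ n i / complex_of_real (sqrt (fact (n i)))))\<^sup>2)"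
    by (simp only: expv_T[OF assms] prod_norm[symmetric] prod_power_distrib)
  also have "\<dots> = (\<Prod>i\<in>T. ((cmod (k i))\<^sup>2) ^ n i / fact (n i))"
    by (intro prod.cong refl) (simp add: norm_divide norm_power power_divide power_mult_distrib[symmetric] power_mult[symmetric] mult.commute)
  finally show ?thesis .
qed

lemma exp_partial:
  fixes x :: real
  assumes "x \<ge> 0" "finite K"
  shows "(\<Sum>k\<in>K. x ^ k / fact k) \<le> exp x"
proof -
  have s: "summable (\<lambda>n. x ^ n /\<^sub>R fact n)" by (rule summable_exp_generic)
  have "(\<Sum>k\<in>K. x ^ k /\<^sub>R fact k) \<le> (\<Sum>n. x ^ n /\<^sub>R fact n)"
    by (rule sum_le_suminf[OF s assms(2)]) (use assms in auto)
  then show ?thesis by (simp add: exp_def divide_inverse mult.commute)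
qed

lemma box_bound:
  fixes a :: "'i \<Rightarrow> real"
  assumes a: "\<And>i. a i \<ge> 0" and I: "finite I"
  shows "finite F \<Longrightarrow> (\<forall>n\<in>F. \<forall>i. i \<notin> I \<longrightarrow> n i = 0) \<Longrightarrow>
     (\<Sum>n\<in>F. \<Prod>i\<in>I. a i ^ n i / fact (n i)) \<le> (\<Prod>i\<in>I. exp (a i))"
  using I
proof (induction I arbitrary: F rule: finite_induct)
  case empty
  then have "F \<subseteq> {\<lambda>_. 0}" by auto
  then have "card F \<le> card {\<lambda>_::'i. 0::nat}" by (intro card_mono) auto
  then show ?case by simp
next
  case (insert j I)
  let ?P = "\<lambda>n. \<Prod>i\<in>I. a i ^ n i / fact (n i)"
  let ?K = "(\<lambda>n. n j) ` F"
  let ?Fk = "\<lambda>k. {n\<in>F. n j = k}"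
  have P0: "?P n \<ge> 0" for n using a by (intro prod_nonneg) auto
  have "(\<Sum>n\<in>F. \<Prod>i\<in>insert j I. a i ^ n i / fact (n i)) = (\<Sum>n\<in>F. a j ^ n j / fact (n j) * ?P n)"
    using insert by simp
  also have "\<dots> = (\<Sum>k\<in>?K. \<Sum>n\<in>?Fk k. a j ^ n j / fact (n j) * ?P n)"
    by (rule sum.image_gen) (use insert in auto)
  also have "\<dots> = (\<Sum>k\<in>?K. a j ^ k / fact k * (\<Sum>n\<in>?Fk k. ?P n))"
    by (intro sum.cong refl) (auto simp: sum_distrib_left)
  also have "\<dots> \<le> (\<Sum>k\<in>?K. a j ^ k / fact k * (\<Prod>i\<in>I. exp (a i)))"
  proof (intro sum_mono mult_left_mono)
    fix k assume "k \<in> ?K"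
    have inj: "inj_on (\<lambda>n. n(j := 0)) (?Fk k)"
      by (rule inj_onI) (metis (mono_tags, lifting) fun_upd_idem_iff fun_upd_upd mem_Collect_eq)
    have "(\<Sum>n\<in>?Fk k. ?P n) = (\<Sum>n\<in>?Fk k. ?P (n(j := 0)))"
      by (intro sum.cong refl prod.cong) (use insert in auto)
    also have "\<dots> = (\<Sum>m\<in>(\<lambda>n. n(j := 0)) ` ?Fk k. ?P m)"
      by (rule sum.reindex[OF inj, symmetric, unfolded comp_def])
    also have "\<dots> \<le> (\<Prod>i\<in>I. exp (a i))"
      by (rule insert.IH) (use insert.prems in auto)
    finally show "(\<Sum>n\<in>?Fk k. ?P n) \<le> (\<Prod>i\<in>I. exp (a i))" .
  next
    fix k show "0 \<le> a j ^ k / fact k" using a by simp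
  qed
  also have "\<dots> = (\<Sum>k\<in>?K. a j ^ k / fact k) * (\<Prod>i\<in>I. exp (a i))"
    by (simp add: sum_distrib_right)
  also have "\<dots> \<le> exp (a j) * (\<Prod>i\<in>I. exp (a i))"
    by (intro mult_right_mono exp_partial) (use a insert in \<open>auto intro: prod_nonneg\<close>)
  also have "\<dots> = (\<Prod>i\<in>insert j I. exp (a i))" using insert by simp
  finally show ?case .
qed


lemma l2_nonneg_summable: "l2 k \<Longrightarrow> (\<lambda>i. (cmod (k i))\<^sup>2) summable_on UNIV"
  by (simp add: l2_def)

lemma fock_expv:
  fixes k :: "'i \<Rightarrow> complex"
  assumes "l2 k"
  shows "fock (expv k)"
proof -
  let ?a = "\<lambda>i. (cmod (k i))\<^sup>2"
  let ?B = "exp (\<Sum>\<^sub>\<infinity>i. ?a i)"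
  have sa: "?a summable_on UNIV" using assms by (simp add: l2_def)
  have "(\<lambda>n. (cmod (expv k n))\<^sup>2) summable_on UNIV"
  proof (rule nonneg_bdd_above_summable_on)
    show "bdd_above (sum (\<lambda>n. (cmod (expv k n))\<^sup>2) ` {F. F \<subseteq> UNIV \<and> finite F})"
    proof (rule bdd_aboveI, clarify)
      fix F :: "('i \<Rightarrow> nat) set" assume F: "finite F"
      let ?G = "F \<inter> occ"
      let ?I = "\<Union>n\<in>?G. {i. n i \<noteq> 0}"
      have I: "finite ?I" using F by (auto simp: occ_def)
      have "(\<Sum>n\<in>F. (cmod (expv k n))\<^sup>2) = (\<Sum>n\<in>?G. (cmod (expv k n))\<^sup>2)"
        by (rule sum.mono_neutral_right) (use F in \<open>auto simp: expv_def\<close>)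
      also have "\<dots> = (\<Sum>n\<in>?G. \<Prod>i\<in>?I. ?a i ^ n i / fact (n i))"
        by (intro sum.cong refl norm_expv_sq) (use I in auto)
      also have "\<dots> \<le> (\<Prod>i\<in>?I. exp (?a i))"
        by (rule box_bound) (use F I in auto)
      also have "\<dots> = exp (\<Sum>i\<in>?I. ?a i)" by (rule exp_sum[OF I, symmetric])
      also have "\<dots> \<le> ?B"
        by (subst exp_le_cancel_iff, rule finite_sum_le_infsum[OF sa I]) auto
      finally show "(\<Sum>n\<in>F. (cmod (expv k n))\<^sup>2) \<le> ?B" .
    qed
  qed auto
  then show ?thesis by (simp add: fock_def expv_def)
qed

lemma sq_bound: "2 * ((x::real) * y) \<le> x\<^sup>2 + y\<^sup>2"
proof -
  have "0 \<le> (x - y)\<^sup>2" by simp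
  then show ?thesis by (simp add: power2_diff)
qed

lemma l2_prod_summable:
  assumes "(\<lambda>i. (cmod (a i))\<^sup>2) summable_on A" "(\<lambda>i. (cmod (b i))\<^sup>2) summable_on A"
  shows "(\<lambda>i. a i * b i) summable_on A"
proof -
  have "(\<lambda>i. (cmod (a i))\<^sup>2 + (cmod (b i))\<^sup>2) summable_on A"
    by (rule summable_on_add[OF assms])
  moreover have "norm (a i * b i) \<le> (cmod (a i))\<^sup>2 + (cmod (b i))\<^sup>2" for i
  proof -
    have "2 * (cmod (a i) * cmod (b i)) \<le> (cmod (a i))\<^sup>2 + (cmod (b i))\<^sup>2"
      by (rule sq_bound)
    moreover have "0 \<le> cmod (a i) * cmod (b i)" by simp
    moreover have "norm (a i * b i) = cmod (a i) * cmod (b i)" by (simp add: norm_mult)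
    ultimately show ?thesis by linarith
  qed
  ultimately have "(\<lambda>i. norm (a i * b i)) summable_on A"
    by (rule Infinite_Sum.abs_summable_on_comparison_test')
  then show ?thesis by (rule abs_summable_summable)
qed

lemma l2_hconj: "l2 k \<Longrightarrow> l2 (hconj k)"
  by (simp add: l2_def hconj_def)

lemma fock_summ: "fock \<psi> \<Longrightarrow> (\<lambda>n. (cmod (\<psi> n))\<^sup>2) summable_on UNIV"
  by (simp add: fock_def)

lemma fock_inner_summable:
  "fock \<phi> \<Longrightarrow> fock \<psi> \<Longrightarrow> (\<lambda>n. cnj (\<phi> n) * \<psi> n) summable_on UNIV"
  by (rule l2_prod_summable) (auto simp: fock_def)

lemma fock_lin:
  assumes "fock \<psi>" "fock \<phi>"
  shows "fock (\<lambda>n. c * \<psi> n + \<phi> n)"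
proof -
  have "(\<lambda>n. 2 * (cmod c)\<^sup>2 * (cmod (\<psi> n))\<^sup>2 + 2 * (cmod (\<phi> n))\<^sup>2) summable_on UNIV"
    using assms by (intro summable_on_add summable_on_cmult_right) (auto simp: fock_def)
  moreover have "(cmod (c * \<psi> n + \<phi> n))\<^sup>2 \<le> 2 * (cmod c)\<^sup>2 * (cmod (\<psi> n))\<^sup>2 + 2 * (cmod (\<phi> n))\<^sup>2" for n
  proof -
    have "cmod (c * \<psi> n + \<phi> n) \<le> cmod c * cmod (\<psi> n) + cmod (\<phi> n)"
      by (metis norm_mult norm_triangle_ineq)
    then have "(cmod (c * \<psi> n + \<phi> n))\<^sup>2 \<le> (cmod c * cmod (\<psi> n) + cmod (\<phi> n))\<^sup>2"
      by (simp add: power_mono)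
    also have "\<dots> \<le> 2 * (cmod c)\<^sup>2 * (cmod (\<psi> n))\<^sup>2 + 2 * (cmod (\<phi> n))\<^sup>2"
      using sq_bound[of "cmod c * cmod (\<psi> n)" "cmod (\<phi> n)"]
      by (simp add: power2_sum power_mult_distrib)
    finally show ?thesis .
  qed
  ultimately have "(\<lambda>n. (cmod (c * \<psi> n + \<phi> n))\<^sup>2) summable_on UNIV"
    by (rule summable_on_comparison_test) auto
  then show ?thesis using assms by (simp add: fock_def)
qed

lemma fock_zero: "fock (\<lambda>n. 0)"
  by (simp add: fock_def)

lemma finner_lin2:
  assumes "fock \<phi>" "fock \<psi>" "fock w"
  shows "finner \<phi> (\<lambda>n. c * \<psi> n + w n) = c * finner \<phi> \<psi> + finner \<phi> w"
proof -
  have "finner \<phi> (\<lambda>n. c * \<psi> n + w n) = (\<Sum>\<^sub>\<infinity>n. c * (cnj (\<phi> n) * \<psi> n) + cnj (\<phi> n) * w n)"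
    unfolding finner_def by (simp add: algebra_simps)
  also have "\<dots> = (\<Sum>\<^sub>\<infinity>n. c * (cnj (\<phi> n) * \<psi> n)) + (\<Sum>\<^sub>\<infinity>n. cnj (\<phi> n) * w n)"
    by (intro infsum_add summable_on_cmult_right fock_inner_summable assms)
  also have "\<dots> = c * finner \<phi> \<psi> + finner \<phi> w"
    by (simp add: infsum_cmult_right' finner_def)
  finally show ?thesis .
qed

lemma finner_lin1:
  assumes "fock \<phi>" "fock \<psi>" "fock w"
  shows "finner (\<lambda>n. c * \<psi> n + w n) \<phi> = cnj c * finner \<psi> \<phi> + finner w \<phi>"
proof -
  have "finner (\<lambda>n. c * \<psi> n + w n) \<phi> = (\<Sum>\<^sub>\<infinity>n. cnj c * (cnj (\<psi> n) * \<phi> n) + cnj (w n) * \<phi> n)"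
    unfolding finner_def by (simp add: algebra_simps)
  also have "\<dots> = (\<Sum>\<^sub>\<infinity>n. cnj c * (cnj (\<psi> n) * \<phi> n)) + (\<Sum>\<^sub>\<infinity>n. cnj (w n) * \<phi> n)"
    by (intro infsum_add summable_on_cmult_right fock_inner_summable assms)
  also have "\<dots> = cnj c * finner \<psi> \<phi> + finner w \<phi>"
    by (simp add: infsum_cmult_right' finner_def)
  finally show ?thesis .
qed

definition linop :: "((('i \<Rightarrow> nat) \<Rightarrow> complex) \<Rightarrow> (('i \<Rightarrow> nat) \<Rightarrow> complex)) \<Rightarrow> bool" where
  "linop T \<longleftrightarrow> (\<forall>\<psi>. fock \<psi> \<longrightarrow> fock (T \<psi>)) \<and>
     (\<forall>\<psi> \<phi> c. fock \<psi> \<longrightarrow> fock \<phi> \<longrightarrow> T (\<lambda>n. c * \<psi> n + \<phi> n) = (\<lambda>n. c * T \<psi> n + T \<phi> n))"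

lemma bounded_linop: "bounded_op T \<Longrightarrow> linop T"
  by (simp add: bounded_op_def linop_def)

lemma Salg_linop:
  fixes A :: "(('i \<Rightarrow> nat) \<Rightarrow> complex) \<Rightarrow> (('i \<Rightarrow> nat) \<Rightarrow> complex)"
  shows "A \<in> Salg \<Longrightarrow> linop A"
proof (induction rule: Salg.induct)
  case (gen h1 h2 \<phi>)
  then have "\<phi> \<in> domO h1 h2" using pds.base by blast
  then have "\<exists>M. bounded_op M \<and> (\<forall>k1 k2. l2 k1 \<longrightarrow> l2 k2 \<longrightarrow> finner (expv k1) (M (expv k2)) = O_me h1 h2 \<phi> k1 k2)"
    by (auto simp: domO_def)
  then have "bounded_op (Oop h1 h2 \<phi>)" unfolding Oop_def by (rule someI2_ex) blast
  then show ?case by (rule bounded_linop)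
next
  case (add A B)
  then show ?case unfolding linop_def
    by (auto simp: fock_lin[where c=1, simplified] algebra_simps fun_eq_iff)
next
  case (mult A B)
  then show ?case unfolding linop_def by auto
next
  case (scal A c)
  show ?case unfolding linop_def
  proof safe
    fix \<psi> :: "('i \<Rightarrow> nat) \<Rightarrow> complex" assume "fock \<psi>"
    then show "fock (\<lambda>n. c * A \<psi> n)" using scal fock_lin[of _ "\<lambda>n. 0" c] fock_zero
      unfolding linop_def by auto
  next
    fix \<psi> \<phi> :: "('i \<Rightarrow> nat) \<Rightarrow> complex" and d assume "fock \<psi>" "fock \<phi>"
    then show "(\<lambda>n. c * A (\<lambda>n. d * \<psi> n + \<phi> n) n) = (\<lambda>n. d * (c * A \<psi> n) + c * A \<phi> n)"
      using scal unfolding linop_def by (auto simp: algebra_simps)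
  qed
qed

lemma linop_scale:
  assumes "linop T" "fock \<psi>"
  shows "T (\<lambda>n. c * \<psi> n) = (\<lambda>n. c * T \<psi> n)"
proof -
  have z: "T (\<lambda>n. 0) = (\<lambda>n. 0)"
  proof -
    have "T (\<lambda>n. 1 * 0 + 0) = (\<lambda>n. 1 * T (\<lambda>n. 0) n + T (\<lambda>n. 0) n)"
      using assms(1) fock_zero unfolding linop_def by blast
    then show ?thesis by (simp add: fun_eq_iff)
  qed
  have "T (\<lambda>n. c * \<psi> n + 0) = (\<lambda>n. c * T \<psi> n + T (\<lambda>n. 0) n)"
    using assms fock_zero unfolding linop_def by blast
  then show ?thesis using z by simp
qed


lemma sqrt_fact_Suc: "sqrt (fact (Suc m)) = sqrt (real (Suc m)) * sqrt (fact m)"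
  by (simp add: real_sqrt_mult)

lemma expv_incr:
  assumes "n \<in> occ"
  shows "complex_of_real (sqrt (real (Suc (n i)))) * expv g (incr n i) = g i * expv g n"
proof -
  let ?S = "insert i {i. n i \<noteq> 0}"
  let ?f = "\<lambda>m j. g j ^ m j / complex_of_real (sqrt (fact (m j)))"
  have fS: "finite ?S" using assms by (simp add: occ_def)
  have E1: "expv g (incr n i) = (\<Prod>j\<in>?S. ?f (incr n i) j)"
    by (rule expv_T[OF incr_occ[OF assms] fS]) (auto simp: incr_def)
  have e1: "expv g (incr n i) = ?f (incr n i) i * (\<Prod>j\<in>?S - {i}. ?f (incr n i) j)"
    unfolding E1 by (rule prod.remove[OF fS]) simp
  have E2: "expv g n = (\<Prod>j\<in>?S. ?f n j)"
    by (rule expv_T[OF assms fS]) auto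
  have e2: "expv g n = ?f n i * (\<Prod>j\<in>?S - {i}. ?f n j)"
    unfolding E2 by (rule prod.remove[OF fS]) simp
  have e3: "(\<Prod>j\<in>?S - {i}. ?f (incr n i) j) = (\<Prod>j\<in>?S - {i}. ?f n j)"
    by (intro prod.cong refl) (auto simp: incr_def)
  have key: "complex_of_real (sqrt (real (Suc (n i)))) * ?f (incr n i) i = g i * ?f n i"
  proof -
    have pos: "sqrt (real (Suc (n i))) > 0" "sqrt (fact (n i)) > 0" by auto
    have "complex_of_real (sqrt (real (Suc (n i)))) * ?f (incr n i) i =
      complex_of_real (sqrt (real (Suc (n i)))) * (g i ^ Suc (n i) /
        (complex_of_real (sqrt (real (Suc (n i)))) * complex_of_real (sqrt (fact (n i)))))"
      by (simp add: incr_def sqrt_fact_Suc del: fact_Suc)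
    also have "\<dots> = g i * ?f n i" using pos by (simp add: field_simps)
    finally show ?thesis .
  qed
  have "complex_of_real (sqrt (real (Suc (n i)))) * expv g (incr n i) =
     (complex_of_real (sqrt (real (Suc (n i)))) * ?f (incr n i) i) * (\<Prod>j\<in>?S - {i}. ?f (incr n i) j)"
    by (simp only: e1 mult.assoc)
  also have "\<dots> = (g i * ?f n i) * (\<Prod>j\<in>?S - {i}. ?f n j)"
    by (simp only: key e3)
  also have "\<dots> = g i * expv g n" by (simp only: e2 mult.assoc)
  finally show ?thesis .
qed

lemma ann_expv: "ann h (expv g) = (\<lambda>n. hinner h g * expv g n)"
proof
  fix n
  show "ann h (expv g) n = hinner h g * expv g n"
  proof (cases "n \<in> occ")
    case False then show ?thesis by (simp add: ann_def expv_def)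
  next
    case True
    have "ann h (expv g) n = (\<Sum>\<^sub>\<infinity>i. cnj (h i) * g i * expv g n)"
      unfolding ann_def using True expv_incr[OF True]
      by (simp add: mult.assoc)
    also have "\<dots> = hinner h g * expv g n"
      by (simp add: infsum_cmult_left' hinner_def)
    finally show ?thesis .
  qed
qed

lemma prod_deriv_ineq:
  fixes P A D :: "'a \<Rightarrow> real"
  assumes "finite S" "\<And>j. A j + D j \<le> P j" "\<And>j. 0 \<le> A j" "\<And>j. 0 \<le> D j"
  shows "(\<Prod>j\<in>S. A j) + (\<Sum>i\<in>S. D i * (\<Prod>j\<in>S - {i}. A j)) \<le> (\<Prod>j\<in>S. P j)"
  using assms(1)
proof (induction S rule: finite_induct)
  case empty then show ?case by simp
next
  case (insert k S)
  have Pn: "0 \<le> (\<Prod>j\<in>S. P j)" using assms(2-4) by (intro prod_nonneg) (smt (verit))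
  have An: "0 \<le> (\<Prod>j\<in>S. A j)" using assms(3) by (intro prod_nonneg) auto
  have sn: "0 \<le> (\<Sum>i\<in>S. D i * (\<Prod>j\<in>S - {i}. A j))"
    using assms(3,4) by (intro sum_nonneg mult_nonneg_nonneg prod_nonneg) auto
  have eqs: "(\<Sum>i\<in>S. D i * (\<Prod>j\<in>insert k S - {i}. A j)) = A k * (\<Sum>i\<in>S. D i * (\<Prod>j\<in>S - {i}. A j))"
  proof -
    have "(\<Sum>i\<in>S. D i * (\<Prod>j\<in>insert k S - {i}. A j)) = (\<Sum>i\<in>S. A k * (D i * (\<Prod>j\<in>S - {i}. A j)))"
    proof (intro sum.cong refl)
      fix i assume "i \<in> S"
      then have "insert k S - {i} = insert k (S - {i})" using insert by auto
      then show "D i * (\<Prod>j\<in>insert k S - {i}. A j) = A k * (D i * (\<Prod>j\<in>S - {i}. A j))"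
        using insert by simp
    qed
    then show ?thesis by (simp add: sum_distrib_left)
  qed
  have "(\<Prod>j\<in>insert k S. A j) + (\<Sum>i\<in>insert k S. D i * (\<Prod>j\<in>insert k S - {i}. A j))
      = A k * (\<Prod>j\<in>S. A j) + D k * (\<Prod>j\<in>S. A j) + A k * (\<Sum>i\<in>S. D i * (\<Prod>j\<in>S - {i}. A j))"
    using insert eqs by (simp add: insert_Diff_if)
  also have "\<dots> \<le> (A k + D k) * ((\<Prod>j\<in>S. A j) + (\<Sum>i\<in>S. D i * (\<Prod>j\<in>S - {i}. A j)))"
    using assms(3,4)[of k] An sn by (simp add: algebra_simps)
  also have "\<dots> \<le> P k * (\<Prod>j\<in>S. P j)"
    by (intro mult_mono insert.IH assms(2)) (use assms(2,3,4)[of k] An sn Pn in auto)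
  also have "\<dots> = (\<Prod>j\<in>insert k S. P j)" using insert by simp
  finally show ?case .
qed

lemma binom_lower:
  fixes a b :: real
  assumes "0 \<le> a" "0 \<le> b"
  shows "a ^ m + real m * b * a ^ (m - 1) \<le> (a + b) ^ m"
proof (induction m)
  case 0 then show ?case by simp
next
  case (Suc m)
  have "a ^ Suc m + real (Suc m) * b * a ^ m \<le> (a + b) * (a ^ m + real m * b * a ^ (m - 1))"
  proof (cases m)
    case 0 then show ?thesis by simp
  next
    case (Suc k)
    then have "a * a ^ (m - 1) = a ^ m" by simp
    then show ?thesis using assms
      by (simp add: algebra_simps)
  qed
  also have "\<dots> \<le> (a + b) * (a + b) ^ m"
    using Suc assms by (intro mult_left_mono) auto
  finally show ?case by simp
qed

lemma single_factor:
  fixes a b :: real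
  assumes "0 \<le> a" "0 \<le> b"
  shows "a ^ m / sqrt (fact m) + b * sqrt (real m) * (a ^ (m - 1) / sqrt (fact (m - 1)))
     \<le> (a + b) ^ m / sqrt (fact m)"
proof (cases m)
  case 0 then show ?thesis by simp
next
  case (Suc k)
  have "sqrt (real m) / sqrt (fact (m - 1)) = real m / sqrt (fact m)"
    using Suc by (simp add: sqrt_fact_Suc field_simps del: fact_Suc)
  then have "b * sqrt (real m) * (a ^ (m - 1) / sqrt (fact (m - 1))) = real m * b * a ^ (m - 1) / sqrt (fact m)"
    by (simp add: field_simps)
  then show ?thesis using binom_lower[OF assms, of m]
    by (simp add: add_divide_distrib[symmetric] divide_right_mono)
qed


lemma norm_f: "cmod (k ^ m / complex_of_real (sqrt (fact m))) = cmod k ^ m / sqrt (fact m)"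
  by (simp add: norm_divide norm_power)

lemma norm_c: "cmod (complex_of_real (cmod a) + complex_of_real (cmod b)) = cmod a + cmod b"
  by (metis abs_of_nonneg add_nonneg_nonneg norm_ge_zero norm_of_real of_real_add)

lemma cre_bound:
  assumes "n \<in> occ"
  shows "cmod (cre h (expv g) n) \<le> cmod (expv (\<lambda>i. complex_of_real (cmod (g i) + cmod (h i))) n)"
proof -
  let ?S = "{i. n i \<noteq> 0}"
  have fS: "finite ?S" using assms by (simp add: occ_def)
  let ?f = "\<lambda>k m j. k j ^ m j / complex_of_real (sqrt (fact (m j)))"
  define A where "A j = cmod (g j) ^ n j / sqrt (fact (n j))" for j
  define D where "D j = cmod (h j) * sqrt (real (n j)) * (cmod (g j) ^ (n j - 1) / sqrt (fact (n j - 1)))" for j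
  define P where "P j = (cmod (g j) + cmod (h j)) ^ n j / sqrt (fact (n j))" for j
  have trm: "cmod (expv g (decr n i)) = (cmod (g i) ^ (n i - 1) / sqrt (fact (n i - 1))) * (\<Prod>j\<in>?S - {i}. A j)"
    if i: "i \<in> ?S" for i
  proof -
    have E: "expv g (decr n i) = (\<Prod>j\<in>?S. ?f g (decr n i) j)"
      by (rule expv_T[OF decr_occ[OF assms] fS]) (auto simp: decr_def)
    have "expv g (decr n i) = ?f g (decr n i) i * (\<Prod>j\<in>?S - {i}. ?f g (decr n i) j)"
      unfolding E by (rule prod.remove[OF fS i])
    also have "(\<Prod>j\<in>?S - {i}. ?f g (decr n i) j) = (\<Prod>j\<in>?S - {i}. ?f g n j)"
      by (intro prod.cong refl) (auto simp: decr_def)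
    finally have EE: "expv g (decr n i) = ?f g (decr n i) i * (\<Prod>j\<in>?S - {i}. ?f g n j)" .
    have "cmod (expv g (decr n i)) = cmod (?f g (decr n i) i) * (\<Prod>j\<in>?S - {i}. cmod (?f g n j))"
      by (simp only: EE norm_mult prod_norm)
    then show ?thesis by (simp only: norm_f A_def) (simp add: decr_def)
  qed
  have "cmod (cre h (expv g) n) = cmod (\<Sum>i\<in>?S. h i * complex_of_real (sqrt (real (n i))) * expv g (decr n i))"
    using assms by (simp add: cre_def)
  also have "\<dots> \<le> (\<Sum>i\<in>?S. cmod (h i * complex_of_real (sqrt (real (n i))) * expv g (decr n i)))"
    by (rule norm_sum)
  also have "\<dots> = (\<Sum>i\<in>?S. D i * (\<Prod>j\<in>?S - {i}. A j))"
  proof (intro sum.cong refl)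
    fix i assume i: "i \<in> ?S"
    show "cmod (h i * complex_of_real (sqrt (real (n i))) * expv g (decr n i)) = D i * (\<Prod>j\<in>?S - {i}. A j)"
      by (simp only: norm_mult trm[OF i] D_def norm_of_real) (simp add: mult.assoc abs_of_nonneg)
  qed
  also have "\<dots> \<le> (\<Prod>j\<in>?S. A j) + (\<Sum>i\<in>?S. D i * (\<Prod>j\<in>?S - {i}. A j))"
    using A_def by (simp add: prod_nonneg)
  also have "\<dots> \<le> (\<Prod>j\<in>?S. P j)"
  proof (rule prod_deriv_ineq[OF fS])
    fix j show "A j + D j \<le> P j" unfolding A_def D_def P_def by (rule single_factor) auto
  qed (auto simp: A_def D_def)
  also have "\<dots> = cmod (expv (\<lambda>i. complex_of_real (cmod (g i) + cmod (h i))) n)"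
    by (simp add: expv_T[OF assms fS] prod_norm[symmetric] norm_f P_def norm_c)
  finally show ?thesis .
qed

lemma fock_cre:
  fixes g h :: "'i \<Rightarrow> complex"
  assumes "l2 g" "l2 h"
  shows "fock (cre h (expv g))"
proof -
  let ?c = "\<lambda>i. complex_of_real (cmod (g i) + cmod (h i))"
  have "l2 ?c"
  proof -
    have "(\<lambda>i. 2 * (cmod (g i))\<^sup>2 + 2 * (cmod (h i))\<^sup>2) summable_on UNIV"
      using assms by (intro summable_on_add summable_on_cmult_right) (auto simp: l2_def)
    moreover have "(cmod (?c i))\<^sup>2 \<le> 2 * (cmod (g i))\<^sup>2 + 2 * (cmod (h i))\<^sup>2" for i
    proof -
      have "cmod (?c i) = cmod (g i) + cmod (h i)"
        by (metis abs_of_nonneg add_nonneg_nonneg norm_ge_zero norm_of_real)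
      then show ?thesis using sq_bound[of "cmod (g i)" "cmod (h i)"] by (simp add: power2_sum)
    qed
    ultimately show ?thesis unfolding l2_def
      by (rule summable_on_comparison_test) auto
  qed
  then have fc: "fock (expv ?c)" by (rule fock_expv)
  have "(\<lambda>n. (cmod (cre h (expv g) n))\<^sup>2) summable_on UNIV"
  proof (rule summable_on_comparison_test[OF fock_summ[OF fc]])
    fix n :: "'i \<Rightarrow> nat"
    show "(cmod (cre h (expv g) n))\<^sup>2 \<le> (cmod (expv ?c n))\<^sup>2"
    proof (cases "n \<in> occ")
      case True then show ?thesis using cre_bound[OF True, of h g] by (simp add: power_mono)
    next
      case False then show ?thesis by (simp add: cre_def)
    qed
  qed auto
  then show ?thesis by (simp add: fock_def cre_def)
qed


lemma finner_scale2: "finner \<phi> (\<lambda>n. c * \<psi> n) = c * finner \<phi> \<psi>"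
  unfolding finner_def by (simp add: infsum_cmult_right'[symmetric] algebra_simps)

lemma finner_scale1: "finner (\<lambda>n. c * \<psi> n) \<phi> = cnj c * finner \<psi> \<phi>"
  unfolding finner_def by (simp add: infsum_cmult_right'[symmetric] algebra_simps)

lemma hconj_hconj[simp]: "hconj (hconj h) = h"
  by (simp add: hconj_def)

lemma hinner_split:
  assumes "l2 f" "l2 g" "l2 h"
  shows "hinner (\<lambda>i. c * f i + d * cnj (g i)) h = cnj c * cnj (hinner h f) + cnj d * hinner (hconj h) g"
proof -
  have s1: "(\<lambda>i. cnj (f i) * h i) summable_on UNIV"
    by (rule l2_prod_summable) (use assms in \<open>auto simp: l2_def\<close>)
  have s2: "(\<lambda>i. g i * h i) summable_on UNIV"
    by (rule l2_prod_summable) (use assms in \<open>auto simp: l2_def\<close>)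
  have "hinner (\<lambda>i. c * f i + d * cnj (g i)) h = (\<Sum>\<^sub>\<infinity>i. cnj c * (cnj (f i) * h i) + cnj d * (g i * h i))"
    unfolding hinner_def by (simp add: algebra_simps)
  also have "\<dots> = (\<Sum>\<^sub>\<infinity>i. cnj c * (cnj (f i) * h i)) + (\<Sum>\<^sub>\<infinity>i. cnj d * (g i * h i))"
    by (intro infsum_add summable_on_cmult_right s1 s2)
  also have "\<dots> = cnj c * (\<Sum>\<^sub>\<infinity>i. cnj (f i) * h i) + cnj d * (\<Sum>\<^sub>\<infinity>i. g i * h i)"
    by (simp add: infsum_cmult_right')
  also have "(\<Sum>\<^sub>\<infinity>i. cnj (f i) * h i) = cnj (hinner h f)"
    unfolding hinner_def infsum_cnj[symmetric] by (simp add: mult.commute)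
  also have "(\<Sum>\<^sub>\<infinity>i. g i * h i) = hinner (hconj h) g"
    unfolding hinner_def hconj_def by (simp add: mult.commute)
  finally show ?thesis .
qed

lemma X_expv: "Xop h1 h2 (expv g) = (\<lambda>n. (\<i> * hinner (hconj h1) g + hinner (hconj h2) g) * expv g n
     + (- \<i> * cre h1 (expv g) n + cre h2 (expv g) n))"
  unfolding Xop_def Pop_def Qop_def ann_expv by (simp add: fun_eq_iff algebra_simps)

lemma Y_expv: "Yop h1 h2 (expv g) = (\<lambda>n. (hinner (hconj h1) g - \<i> * hinner (hconj h2) g) * expv g n
     + \<i> * (- \<i> * cre h1 (expv g) n + cre h2 (expv g) n))"
  unfolding Yop_def Pop_def Qop_def ann_expv by (simp add: fun_eq_iff algebra_simps)

lemma main_j: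
  fixes F :: "(('i \<Rightarrow> nat) \<Rightarrow> complex) \<Rightarrow> (('i \<Rightarrow> nat) \<Rightarrow> complex)"
  assumes F: "linop F" and h: "l2 h1" "l2 h2" and fg: "l2 f" "l2 g"
  shows "A_me h1 h2 F f g - D_me h1 h2 F f g =
    (hinner (\<lambda>i. \<i> * f i - \<i> * cnj (g i)) h1 + hinner (\<lambda>i. f i + cnj (g i)) h2) * finner (expv f) (F (expv g))"
proof -
  define a1 where "a1 = hinner (hconj h1) g"
  define a2 where "a2 = hinner (hconj h2) g"
  define b1 where "b1 = hinner h1 f"
  define b2 where "b2 = hinner h2 f"
  define w where "w = (\<lambda>n. - \<i> * cre h1 (expv g) n + cre h2 (expv g) n)"
  define w' where "w' = (\<lambda>n. - \<i> * cre (hconj h1) (expv f) n + cre (hconj h2) (expv f) n)"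
  define P where "P = finner (expv f) (F (expv g))"
  define G where "G = F (expv g)"
  define Q1 where "Q1 = finner w' G"
  define Q2 where "Q2 = finner (expv f) (F w)"
  have Ef: "fock (expv f)" and Eg: "fock (expv g)" using fg by (auto intro: fock_expv)
  have hc: "l2 (hconj h1)" "l2 (hconj h2)" using h by (auto intro: l2_hconj)
  have fw: "fock w" unfolding w_def
    by (intro fock_lin fock_cre h fg)
  have fw': "fock w'" unfolding w'_def
    by (intro fock_lin fock_cre hc fg)
  have fiw: "fock (\<lambda>n. \<i> * w n)" using fock_lin[OF fw fock_zero, of \<i>] by simp
  have fpres: "\<And>\<psi>. fock \<psi> \<Longrightarrow> fock (F \<psi>)" using F unfolding linop_def by blast
  have fG: "fock G" unfolding G_def by (rule fpres[OF Eg])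
  have fFw: "fock (F w)" by (rule fpres[OF fw])
  have lin: "\<And>\<psi> \<phi> c. fock \<psi> \<Longrightarrow> fock \<phi> \<Longrightarrow> F (\<lambda>n. c * \<psi> n + \<phi> n) = (\<lambda>n. c * F \<psi> n + F \<phi> n)"
    using F unfolding linop_def by blast
  have XG: "Xop h1 h2 (expv g) = (\<lambda>n. (\<i> * a1 + a2) * expv g n + w n)"
    unfolding X_expv a1_def a2_def w_def by simp
  have YG: "Yop h1 h2 (expv g) = (\<lambda>n. (a1 - \<i> * a2) * expv g n + (\<lambda>n. \<i> * w n) n)"
    unfolding Y_expv a1_def a2_def w_def by simp
  have FX: "F (Xop h1 h2 (expv g)) = (\<lambda>n. (\<i> * a1 + a2) * G n + F w n)"
    unfolding XG G_def by (rule lin[OF Eg fw])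
  have "F (Yop h1 h2 (expv g)) = (\<lambda>n. (a1 - \<i> * a2) * G n + F (\<lambda>n. \<i> * w n) n)"
    unfolding YG G_def by (rule lin[OF Eg fiw])
  also have "F (\<lambda>n. \<i> * w n) = (\<lambda>n. \<i> * F w n)" by (rule linop_scale[OF F fw])
  finally have FY: "F (Yop h1 h2 (expv g)) = (\<lambda>n. (a1 - \<i> * a2) * G n + \<i> * F w n)" .
  have XF: "Xop (hconj h1) (hconj h2) (expv f) = (\<lambda>n. (\<i> * b1 + b2) * expv f n + w' n)"
    unfolding X_expv b1_def b2_def w'_def by simp
  have YF: "Yop (hconj h1) (hconj h2) (expv f) = (\<lambda>n. (b1 - \<i> * b2) * expv f n + \<i> * w' n)"
    unfolding Y_expv b1_def b2_def w'_def by simp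
  have t1: "finner (Xop (hconj h1) (hconj h2) (expv f)) G = cnj (\<i> * b1 + b2) * P + Q1"
    unfolding XF Q1_def P_def G_def[symmetric] by (rule finner_lin1[OF fG Ef fw'])
  have t2: "finner (expv f) (F (Xop h1 h2 (expv g))) = (\<i> * a1 + a2) * P + Q2"
    unfolding FX Q2_def P_def G_def[symmetric] by (rule finner_lin2[OF Ef fG fFw])
  have t3: "finner (Yop (hconj h1) (hconj h2) (expv f)) G = cnj (b1 - \<i> * b2) * P - \<i> * Q1"
  proof -
    have "finner (Yop (hconj h1) (hconj h2) (expv f)) G = cnj (b1 - \<i> * b2) * P + finner (\<lambda>n. \<i> * w' n) G"
      unfolding YF P_def G_def[symmetric] by (rule finner_lin1[OF fG Ef fock_lin[OF fw' fock_zero, of \<i>, simplified]])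
    then show ?thesis by (simp add: finner_scale1 Q1_def)
  qed
  have t4: "finner (expv f) (F (Yop h1 h2 (expv g))) = (a1 - \<i> * a2) * P + \<i> * Q2"
  proof -
    have "finner (expv f) (F (Yop h1 h2 (expv g))) = (a1 - \<i> * a2) * P + finner (expv f) (\<lambda>n. \<i> * F w n)"
      unfolding FY P_def G_def[symmetric] by (rule finner_lin2[OF Ef fG fock_lin[OF fFw fock_zero, of \<i>, simplified]])
    then show ?thesis by (simp add: finner_scale2 Q2_def)
  qed
  have lhs: "A_me h1 h2 F f g - D_me h1 h2 F f g = (- \<i> * cnj b1 + cnj b2 + \<i> * a1 + a2) * P"
    unfolding A_me_def D_me_def G_def[symmetric] t1 t2 t3 t4 unfolding G_def
    by (simp add: algebra_simps)
  have r1: "hinner (\<lambda>i. \<i> * f i - \<i> * cnj (g i)) h1 = - \<i> * cnj b1 + \<i> * a1"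
    using hinner_split[OF fg h(1), of \<i> "- \<i>"] unfolding b1_def a1_def by simp
  have r2: "hinner (\<lambda>i. f i + cnj (g i)) h2 = cnj b2 + a2"
    using hinner_split[OF fg h(2), of 1 1] unfolding b2_def a2_def by simp
  show ?thesis unfolding lhs r1 r2 P_def by (simp add: algebra_simps)
qed


theorem theorem6p5:
  fixes F :: "nat \<Rightarrow> (('i::countable \<Rightarrow> nat) \<Rightarrow> complex) \<Rightarrow> (('i \<Rightarrow> nat) \<Rightarrow> complex)"
    and H1 H2 :: "nat \<Rightarrow> 'i \<Rightarrow> complex"
    and n :: nat
    and f g :: "'i \<Rightarrow> complex"
  assumes "in_Shd F H1 H2 n"
    and "l2 f" and "l2 g"
  shows "finner (expv f) (delta F H1 H2 n (expv g)) =
    (\<Sum>j<n. (hinner (\<lambda>i. \<i> * f i - \<i> * cnj (g i)) (H1 j) + hinner (\<lambda>i. f i + cnj (g i)) (H2 j))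
            * finner (expv f) (F j (expv g)))"
proof -
  have ex: "\<exists>M. bounded_op M \<and> (\<forall>f g. l2 f \<longrightarrow> l2 g \<longrightarrow> finner (expv f) (M (expv g)) = delta_me F H1 H2 n f g)"
    using assms(1) unfolding in_Shd_def by blast
  have "\<forall>f g. l2 f \<longrightarrow> l2 g \<longrightarrow> finner (expv f) (delta F H1 H2 n (expv g)) = delta_me F H1 H2 n f g"
    unfolding delta_def by (rule someI2_ex[OF ex]) blast
  then have "finner (expv f) (delta F H1 H2 n (expv g)) = delta_me F H1 H2 n f g"
    using assms(2,3) by blast
  also have "\<dots> = (\<Sum>j<n. (hinner (\<lambda>i. \<i> * f i - \<i> * cnj (g i)) (H1 j) + hinner (\<lambda>i. f i + cnj (g i)) (H2 j))
            * finner (expv f) (F j (expv g)))"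
    unfolding delta_me_def
  proof (intro sum.cong refl)
    fix j assume "j \<in> {..<n}"
    then have j: "F j \<in> Salg" "l2 (H1 j)" "l2 (H2 j)" using assms(1) unfolding in_Shd_def by auto
    show "A_me (H1 j) (H2 j) (F j) f g - D_me (H1 j) (H2 j) (F j) f g =
      (hinner (\<lambda>i. \<i> * f i - \<i> * cnj (g i)) (H1 j) + hinner (\<lambda>i. f i + cnj (g i)) (H2 j))
            * finner (expv f) (F j (expv g))"
      by (rule main_j[OF Salg_linop[OF j(1)] j(2,3) assms(2,3)])
  qed
  finally show ?thesis .
qed

end
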